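(* Let $r \ge 1$ and let $O, E, B \subseteq \mathbb{R}^r$ be axis-aligned bounding boxes. Then \[ \Bigl[\forall o' \in \mathrm{Corners}(O) : \mathrm{MaxDist}(o', E) < \mathrm{MinDist}(o', B)\Bigr] \iff \Bigl[\forall o \in O : \forall e \in E : \forall b \in B : \mathrm{dist}(o, e) < \mathrm{dist}(o, b)\Bigr]. \]
   Context: An axis-aligned bounding box (AABB) in $\mathbb{R}^r$ is a set $M = \prod_{d=1}^r [\check{M}_d, \hat{M}_d]$ with real numbers $\check{M}_d \le \hat{M}_d$ for each $d$; membership $p \in M$ means $\check{M}_d \le p_d \le \hat{M}_d$ for all $d$. $\mathrm{Corners}(M)$ is the set of the $2^r$ vertices of $M$, i.e. the points $c$ with $c_d \in \{\check{M}_d, \hat{M}_d\}$ for every $d$. $\mathrm{dist}$ is the Euclidean distance on $\mathbb{R}^r$. For a point $p$ and an AABB $M$, $\mathrm{MaxDist}(p, M) = \max_{q \in M} \mathrm{dist}(p, q)$ and $\mathrm{MinDist}(p, M) = \min_{q \in M} \mathrm{dist}(p, q)$. *)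

theory Defs
  imports "HOL-Analysis.Analysis"
begin

definition aabb :: "real^'n \<Rightarrow> real^'n \<Rightarrow> (real^'n) set" where
  "aabb lo hi = {p. \<forall>d. lo $ d \<le> p $ d \<and> p $ d \<le> hi $ d}"

definition corners :: "real^'n \<Rightarrow> real^'n \<Rightarrow> (real^'n) set" where
  "corners lo hi = {c. \<forall>d. c $ d = lo $ d \<or> c $ d = hi $ d}"

definition MaxDist :: "real^'n \<Rightarrow> (real^'n) set \<Rightarrow> real" where
  "MaxDist p M = (SUP q\<in>M. dist p q)"

definition MinDist :: "real^'n \<Rightarrow> (real^'n) set \<Rightarrow> real" where
  "MinDist p M = (INF q\<in>M. dist p q)"

end

theory Submission
  imports Defs
begin

lemma aabb_cbox: "aabb lo hi = cbox lo hi"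
  unfolding aabb_def by (auto simp: mem_box_cart)

lemma aabb_ne: "\<forall>d. lo $ d \<le> hi $ d \<Longrightarrow> aabb lo hi \<noteq> {}"
  unfolding aabb_def by auto

lemma dist_sq: "(dist (x::real^'n) y)^2 = (\<Sum>d\<in>UNIV. (x$d - y$d)^2)"
  unfolding dist_norm power2_norm_eq_inner inner_vec_def by (simp add: power2_eq_square)

lemma maxdist_ge: "e \<in> aabb lo hi \<Longrightarrow> dist c e \<le> MaxDist c (aabb lo hi)"
  unfolding MaxDist_def
proof (rule cSUP_upper)
  show "bdd_above (dist c ` aabb lo hi)"
    unfolding aabb_cbox
    by (intro bounded_imp_bdd_above compact_imp_bounded compact_continuous_image continuous_intros compact_cbox)
qed

lemma mindist_le: "b \<in> aabb lo hi \<Longrightarrow> MinDist c (aabb lo hi) \<le> dist c b"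
  unfolding MinDist_def
  by (rule cINF_lower) (auto intro: bdd_belowI[of _ 0])

lemma maxdist_att: "\<forall>d. lo $ d \<le> hi $ d \<Longrightarrow> \<exists>e\<in>aabb lo hi. MaxDist c (aabb lo hi) = dist c e"
proof -
  assume a: "\<forall>d. lo $ d \<le> hi $ d"
  have "compact (aabb lo hi)" by (simp add: aabb_cbox)
  moreover have "continuous_on (aabb lo hi) (dist c)" by (intro continuous_intros)
  ultimately obtain e where e: "e \<in> aabb lo hi" "\<forall>y\<in>aabb lo hi. dist c y \<le> dist c e"
    using continuous_attains_sup[of "aabb lo hi" "dist c"] aabb_ne[OF a] by blast
  have "MaxDist c (aabb lo hi) = dist c e"
    unfolding MaxDist_def using e by (intro antisym cSUP_least cSUP_upper) (auto intro: bdd_aboveI)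
  with e show ?thesis by blast
qed

lemma mindist_att: "\<forall>d. lo $ d \<le> hi $ d \<Longrightarrow> \<exists>e\<in>aabb lo hi. MinDist c (aabb lo hi) = dist c e"
proof -
  assume a: "\<forall>d. lo $ d \<le> hi $ d"
  have "compact (aabb lo hi)" by (simp add: aabb_cbox)
  moreover have "continuous_on (aabb lo hi) (dist c)" by (intro continuous_intros)
  ultimately obtain e where e: "e \<in> aabb lo hi" "\<forall>y\<in>aabb lo hi. dist c e \<le> dist c y"
    using continuous_attains_inf[of "aabb lo hi" "dist c"] aabb_ne[OF a] by blast
  have "MinDist c (aabb lo hi) = dist c e"
    unfolding MinDist_def using e by (intro antisym cINF_greatest cINF_lower) (auto intro: bdd_belowI)
  with e show ?thesis by blast
qed

theorem theorem4p1:
  fixes Olo Ohi Elo Ehi Blo Bhi :: "real^'n"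
  assumes "\<forall>d. Olo $ d \<le> Ohi $ d"
      and "\<forall>d. Elo $ d \<le> Ehi $ d"
      and "\<forall>d. Blo $ d \<le> Bhi $ d"
  shows "(\<forall>c \<in> corners Olo Ohi. MaxDist c (aabb Elo Ehi) < MinDist c (aabb Blo Bhi))
     \<longleftrightarrow> (\<forall>x \<in> aabb Olo Ohi. \<forall>e \<in> aabb Elo Ehi. \<forall>b \<in> aabb Blo Bhi. dist x e < dist x b)"
proof
  assume H: "\<forall>c \<in> corners Olo Ohi. MaxDist c (aabb Elo Ehi) < MinDist c (aabb Blo Bhi)"
  show "\<forall>x \<in> aabb Olo Ohi. \<forall>e \<in> aabb Elo Ehi. \<forall>b \<in> aabb Blo Bhi. dist x e < dist x b"
  proof (intro ballI)
    fix x e b assume x: "x \<in> aabb Olo Ohi" and e: "e \<in> aabb Elo Ehi" and b: "b \<in> aabb Blo Bhi"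
    define g where "g d t = (t - e$d)^2 - (t - b$d)^2" for d t
    define c where "c = (\<chi> d. if g d (Ohi$d) \<le> g d (Olo$d) then Olo$d else Ohi$d)"
    have cc: "c \<in> corners Olo Ohi" unfolding corners_def c_def by auto
    have gle: "g d (x$d) \<le> g d (c$d)" for d
    proof -
      have l: "Olo$d \<le> x$d" "x$d \<le> Ohi$d" using x unfolding aabb_def by auto
      have lin: "g d t = 2*t*(b$d - e$d) + (e$d)^2 - (b$d)^2" for t
        unfolding g_def by (simp add: power2_eq_square algebra_simps)
      show ?thesis
      proof (cases "b$d - e$d \<ge> 0")
        case True
        have "x$d * (b$d - e$d) \<le> Ohi$d * (b$d - e$d)" using l(2) True by (rule mult_right_mono)
        hence "g d (x$d) \<le> g d (Ohi$d)" unfolding lin by linarith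
        also have "\<dots> \<le> g d (c$d)" unfolding c_def by auto
        finally show ?thesis .
      next
        case False
        have "x$d * (b$d - e$d) \<le> Olo$d * (b$d - e$d)" using l False by (intro mult_right_mono_neg) auto
        hence "g d (x$d) \<le> g d (Olo$d)" unfolding lin by linarith
        also have "\<dots> \<le> g d (c$d)" unfolding c_def by auto
        finally show ?thesis .
      qed
    qed
    have "dist c e < dist c b"
      using maxdist_ge[OF e, of c] mindist_le[OF b, of c] H cc by (meson le_less_trans less_le_trans)
    hence "(dist c e)^2 < (dist c b)^2" by (intro power_strict_mono) auto
    hence "(\<Sum>d\<in>UNIV. g d (c$d)) < 0" unfolding dist_sq g_def sum_subtractf by linarith
    moreover have "(\<Sum>d\<in>UNIV. g d (x$d)) \<le> (\<Sum>d\<in>UNIV. g d (c$d))" by (rule sum_mono) (rule gle)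
    ultimately have "(\<Sum>d\<in>UNIV. g d (x$d)) < 0" by linarith
    hence "(dist x e)^2 < (dist x b)^2" unfolding dist_sq g_def sum_subtractf by linarith
    thus "dist x e < dist x b" by (rule power_less_imp_less_base) auto
  qed
next
  assume H: "\<forall>x \<in> aabb Olo Ohi. \<forall>e \<in> aabb Elo Ehi. \<forall>b \<in> aabb Blo Bhi. dist x e < dist x b"
  show "\<forall>c \<in> corners Olo Ohi. MaxDist c (aabb Elo Ehi) < MinDist c (aabb Blo Bhi)"
  proof
    fix c assume c: "c \<in> corners Olo Ohi"
    have "c \<in> aabb Olo Ohi" unfolding aabb_def
    proof (intro CollectI allI)
      fix d
      have "c$d = Olo$d \<or> c$d = Ohi$d" using c unfolding corners_def by blast
      moreover have "Olo$d \<le> Ohi$d" using assms(1) by blast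
      ultimately show "Olo $ d \<le> c $ d \<and> c $ d \<le> Ohi $ d" by auto
    qed
    moreover obtain e where "e \<in> aabb Elo Ehi" "MaxDist c (aabb Elo Ehi) = dist c e"
      using maxdist_att[OF assms(2)] by blast
    moreover obtain b where "b \<in> aabb Blo Bhi" "MinDist c (aabb Blo Bhi) = dist c b"
      using mindist_att[OF assms(3)] by blast
    ultimately show "MaxDist c (aabb Elo Ehi) < MinDist c (aabb Blo Bhi)" using H by auto
  qed
qed

end
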